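(* In the torn-paper channel with lost pieces described in the context, with any distribution on the input $X^n$, there is a finite constant $S$ such that for all integers $J>L\ge1$ and every $\delta>0$, $$\lim_{n\to\infty}\frac{H({\mathcal Y}_{\ge J})}{n}\le 2\big(S\sqrt{L/J}+\delta\big).$$
   Context: All logarithms are base 2 and $H(\cdot)$ denotes Shannon entropy. Channel model: the input is a binary string $X^n$. Let $N_1,N_2,\dots$ be i.i.d. positive-integer random variables (distribution may depend on $n$) with $E[N_1]=\ell_n$, where $\alpha:=\lim_{n\to\infty}(\log n)/\ell_n\in(0,\infty)$. $X^n$ is cut into $K$ consecutive fragments $\vec X_1,\dots,\vec X_K$ of lengths $N_1,\dots,N_K$ ($K$ random, last length truncated so that the lengths sum to $n$). Each fragment is independently deleted with probability $d(N_i)$ for a given $d:\mathbb{Z}_{>0}\to[0,1]$; ${\mathcal Y}$ is the multiset of non-deleted fragments. ${\mathcal Y}_{\ge J}$ is the sub-multiset of fragments in ${\mathcal Y}$ with $N_i\ge (J/L)\log n$. Standing regularity assumptions: $E[N_1/\log n]$ and $E[(N_1/\log n)^2]$ are bounded in $n$. *)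

theory Defs
  imports "HOL-Probability.Probability" "HOL-Library.Multiset"
begin

definition entropy_pmf :: "'a pmf \<Rightarrow> real" where
  "entropy_pmf p = - (\<Sum>x\<in>set_pmf p. pmf p x * log 2 (pmf p x))"

primrec iid_list :: "nat \<Rightarrow> 'a pmf \<Rightarrow> 'a list pmf" where
  "iid_list 0 p = return_pmf []"
| "iid_list (Suc m) p = do { x \<leftarrow> p; xs \<leftarrow> iid_list m p; return_pmf (x # xs) }"

fun frags :: "nat list \<Rightarrow> 'a list \<Rightarrow> (nat \<times> 'a list) list" where
  "frags [] xs = []"
| "frags (k # ks) xs = (if xs = [] then [] else (k, take k xs) # frags ks (drop k xs))"

primrec keep :: "(nat \<Rightarrow> real) \<Rightarrow> (nat \<times> 'a list) list \<Rightarrow> (nat \<times> 'a list) multiset pmf" where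
  "keep d [] = return_pmf {#}"
| "keep d (f # fs) = do { b \<leftarrow> bernoulli_pmf (1 - d (fst f)); M \<leftarrow> keep d fs;
                          return_pmf (if b then add_mset f M else M) }"

text \<open>P n: input distribution of X^n; Nd n: distribution of N_1 (depending on n).
  Since every N_i \<ge> 1, n draws of fragment lengths suffice to cover X^n.\<close>
definition Y_ge :: "(nat \<Rightarrow> bool list pmf) \<Rightarrow> (nat \<Rightarrow> nat pmf) \<Rightarrow> (nat \<Rightarrow> real)
    \<Rightarrow> nat \<Rightarrow> nat \<Rightarrow> nat \<Rightarrow> bool list multiset pmf" where
  "Y_ge P Nd d J L n = do {
      x \<leftarrow> P n;
      ks \<leftarrow> iid_list n (Nd n);
      M \<leftarrow> keep d (frags ks x);
      return_pmf (image_mset snd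
         (filter_mset (\<lambda>f. real (fst f) \<ge> (real J / real L) * log 2 (real n)) M)) }"

end

theory Submission
  imports Defs "HOL-Real_Asymp.Real_Asymp"
begin


definition code :: "bool list \<Rightarrow> bool list" where
  "code s = concat (map (\<lambda>b. [True, b]) s) @ [False]"

fun dec :: "bool list \<Rightarrow> bool list list" where
  "dec [] = []"
| "dec (False # r) = [] # dec r"
| "dec [True] = []"
| "dec (True # b # r) = (case dec r of [] \<Rightarrow> [[b]] | s # ss \<Rightarrow> (b # s) # ss)"

lemma dec_code: "dec (code s @ r) = s # dec r"
  by (induction s) (auto simp: code_def)

lemma dec_concat: "dec (concat (map code l)) = l"
  by (induction l) (auto simp: dec_code)

definition enc :: "bool list multiset \<Rightarrow> bool list" where
  "enc M = concat (map code (SOME l. mset l = M))"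

lemma inj_enc: "inj enc"
proof (rule injI)
  fix M N assume "enc M = enc N"
  hence "(SOME l. mset l = M) = (SOME l. mset l = N)"
    unfolding enc_def by (metis dec_concat)
  moreover have "mset (SOME l. mset l = M) = M" "mset (SOME l. mset l = N) = N"
    by (metis (mono_tags) ex_mset someI_ex)+
  ultimately show "M = N" by metis
qed

lemma length_code: "length (code s) = 2 * length s + 1"
  by (induction s) (auto simp: code_def)

lemma length_enc: "length (enc M) = (\<Sum>s\<in>#M. 2 * length s + 1)"
proof -
  obtain l where l: "(SOME l. mset l = M) = l" "mset l = M"
    by (metis (mono_tags) ex_mset someI_ex)
  have "length (concat (map code l)) = (\<Sum>s\<in>#mset l. 2 * length s + 1)"
    by (induction l) (auto simp: length_code)
  thus ?thesis using l unfolding enc_def by simp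
qed

lemma keep_sub: "M \<in> set_pmf (keep d fs) \<Longrightarrow> M \<subseteq># mset fs"
proof (induction fs arbitrary: M)
  case Nil thus ?case by simp
next
  case (Cons f fs)
  then obtain b M' where "M' \<in> set_pmf (keep d fs)" "M = (if b then add_mset f M' else M')"
    by (auto simp: set_bind_pmf)
  have s: "mset fs \<subseteq># add_mset f (mset fs)" by (simp add: subset_mset.le_add_same_cancel2)
  from Cons.IH[of M'] \<open>M' \<in> _\<close> have "M' \<subseteq># mset fs" by simp
  with s \<open>M = _\<close> show ?case
    by (cases b) (auto simp: mset_subset_eq_add_mset_cancel intro: subset_mset.order_trans)
qed

lemma sum_mset_mono_sub:
  fixes G :: "'a \<Rightarrow> real"
  assumes "M \<subseteq># N" "\<And>x. 0 \<le> G x"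
  shows "(\<Sum>x\<in>#M. G x) \<le> (\<Sum>x\<in>#N. G x)"
proof -
  obtain R where "N = M + R" using assms(1) by (metis subset_mset.le_iff_add)
  have "0 \<le> (\<Sum>x\<in>#R. G x)" using assms(2) by (induction R) (auto intro: add_nonneg_nonneg)
  thus ?thesis using \<open>N = M + R\<close> by simp
qed

fun W :: "real \<Rightarrow> nat list \<Rightarrow> nat \<Rightarrow> real" where
  "W t [] r = 0"
| "W t (k # ks) r = (if r = 0 then 0 else (if t \<le> real k then real k else 0) + W t ks (r - k))"

lemma frags_bound:
  assumes "1 \<le> t"
  shows "(\<Sum>f\<leftarrow>frags ks xs. (if t \<le> real (fst f) then 4 * real (length (snd f)) + 2 else 0))
          \<le> 6 * W t ks (length xs)"
proof (induction ks arbitrary: xs)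
  case Nil thus ?case by simp
next
  case (Cons k ks)
  show ?case
  proof (cases "xs = []")
    case True thus ?thesis by simp
  next
    case False
    have "(if t \<le> real k then 4 * real (length (take k xs)) + 2 else 0)
          \<le> 6 * (if t \<le> real k then real k else 0)"
      using assms by auto
    with Cons.IH[of "drop k xs"] False show ?thesis by auto
  qed
qed



lemma gibbs:
  fixes p :: "'a pmf" and q :: "'a \<Rightarrow> real"
  assumes fin: "finite (set_pmf p)" and qpos: "\<And>x. x \<in> set_pmf p \<Longrightarrow> 0 < q x"
    and qsum: "(\<Sum>x\<in>set_pmf p. q x) \<le> 1"
  shows "entropy_pmf p \<le> (\<Sum>x\<in>set_pmf p. pmf p x * (- log 2 (q x)))"
proof -
  have tm: "(pmf p x - q x) / ln 2 \<le> pmf p x * (- log 2 (q x)) + pmf p x * log 2 (pmf p x)"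
    if x: "x \<in> set_pmf p" for x
  proof -
    have pp: "0 < pmf p x" using x by (simp add: pmf_positive)
    have qp: "0 < q x" using qpos x by simp
    have "ln (q x / pmf p x) \<le> q x / pmf p x - 1" using pp qp by (intro ln_le_minus_one) simp
    hence "pmf p x * ln (q x / pmf p x) \<le> pmf p x * (q x / pmf p x - 1)"
      using pp by (intro mult_left_mono) auto
    also have "\<dots> = q x - pmf p x" using pp by (simp add: field_simps)
    finally have "pmf p x * (ln (pmf p x) - ln (q x)) \<ge> pmf p x - q x"
      using pp qp by (simp add: ln_div algebra_simps)
    hence "(pmf p x - q x) / ln 2 \<le> pmf p x * (ln (pmf p x) - ln (q x)) / ln 2"
      by (intro divide_right_mono) auto
    also have "\<dots> = pmf p x * (- log 2 (q x)) + pmf p x * log 2 (pmf p x)"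
      by (simp add: log_def field_simps)
    finally show ?thesis .
  qed
  have "0 \<le> ((\<Sum>x\<in>set_pmf p. pmf p x) - (\<Sum>x\<in>set_pmf p. q x)) / ln 2"
    using qsum sum_pmf_eq_1[OF fin order_refl] by simp
  also have "\<dots> = (\<Sum>x\<in>set_pmf p. (pmf p x - q x) / ln 2)"
    by (simp add: sum_divide_distrib[symmetric] sum_subtractf)
  also have "\<dots> \<le> (\<Sum>x\<in>set_pmf p. pmf p x * (- log 2 (q x)) + pmf p x * log 2 (pmf p x))"
    by (intro sum_mono tm)
  finally show ?thesis unfolding entropy_pmf_def by (simp add: sum.distrib sum_subtractf sum_negf)
qed

lemma card_bool_lists: "card {w :: bool list. length w = n} = 2 ^ n"
  using card_lists_length_eq[of "UNIV :: bool set" n] by (simp add: card_UNIV_bool)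

lemma fin_bl: "finite {w :: bool list. length w \<le> m}"
  using finite_lists_length_le[of "UNIV :: bool set" m] by simp

lemma qsum_le: "(\<Sum>w\<in>{w :: bool list. length w \<le> m}. (1/2::real) ^ (2 * length w + 1)) = 1 - (1/2) ^ (m + 1)"
proof (induction m)
  case 0
  have "{w :: bool list. length w \<le> 0} = {[]}" by auto
  thus ?case by simp
next
  case (Suc m)
  have eq: "{w :: bool list. length w \<le> Suc m} = {w. length w \<le> m} \<union> {w. length w = Suc m}" by auto
  have "(\<Sum>w\<in>{w :: bool list. length w = Suc m}. (1/2::real) ^ (2 * length w + 1))
        = (\<Sum>w\<in>{w :: bool list. length w = Suc m}. (1/2::real) ^ (2 * Suc m + 1))"
    by (intro sum.cong) auto
  also have "\<dots> = 2 ^ Suc m * (1/2) ^ (2 * Suc m + 1)" by (simp add: card_bool_lists)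
  also have "\<dots> = (1/2) ^ (Suc m + 1)"
  proof -
    have h1: "(1/2::real) ^ (2 * Suc m + 1) = (1/2)^Suc m * (1/2)^Suc m * (1/2)"
      by (simp only: mult_2 power_add power_one_right)
    have h2: "(2::real) ^ Suc m * (1/2)^Suc m = 1"
      by (simp add: power_mult_distrib[symmetric] del: power_Suc)
    have "2 ^ Suc m * (1/2::real) ^ (2 * Suc m + 1) = (2 ^ Suc m * (1/2)^Suc m) * ((1/2)^Suc m * (1/2))"
      unfolding h1 by (simp only: mult_ac)
    also have "\<dots> = (1/2)^(Suc m + 1)" unfolding h2 by (simp only: mult_1_left power_add power_one_right)
    finally show ?thesis .
  qed
  finally have s: "(\<Sum>w\<in>{w :: bool list. length w = Suc m}. (1/2::real) ^ (2 * length w + 1)) = (1/2) ^ (Suc m + 1)" .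
  have "(\<Sum>w\<in>{w :: bool list. length w \<le> Suc m}. (1/2::real) ^ (2 * length w + 1))
     = (\<Sum>w\<in>{w :: bool list. length w \<le> m}. (1/2::real) ^ (2 * length w + 1))
      + (\<Sum>w\<in>{w :: bool list. length w = Suc m}. (1/2::real) ^ (2 * length w + 1))"
    unfolding eq by (intro sum.union_disjoint) (auto intro: fin_bl rev_finite_subset[OF fin_bl[of "Suc m"]])
  thus ?case using Suc s by simp
qed

lemma qsum_fin:
  assumes "finite (A :: bool list set)"
  shows "(\<Sum>w\<in>A. (1/2::real) ^ (2 * length w + 1)) \<le> 1"
proof -
  define m where "m = Max (insert 0 (length ` A))"
  have sub: "A \<subseteq> {w. length w \<le> m}" using assms unfolding m_def by auto
  have "(\<Sum>w\<in>A. (1/2::real) ^ (2 * length w + 1)) \<le> (\<Sum>w\<in>{w :: bool list. length w \<le> m}. (1/2::real) ^ (2 * length w + 1))"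
    by (intro sum_mono2 sub) (auto intro: fin_bl)
  also have "\<dots> \<le> 1" unfolding qsum_le by simp
  finally show ?thesis .
qed



lemma W_nonneg: "0 \<le> W t ks r"
  by (induction ks arbitrary: r) auto

lemma W_zero: "W t ks 0 = 0"
  by (cases ks) auto

lemma W_exp:
  fixes p :: "nat pmf" and t :: real and R :: nat and \<mu> :: real
  assumes intg: "integrable p (\<lambda>k. if t \<le> real k then real k else 0)"
    and mupos: "0 < \<mu>"
    and mudef: "\<mu> = measure_pmf.expectation p (\<lambda>k. real (min k R))"
    and rR: "r \<le> R"
  shows "(\<integral>\<^sup>+ks. ennreal (W t ks r) \<partial>iid_list m p)
      \<le> ennreal (if r = 0 then 0 else measure_pmf.expectation p (\<lambda>k. if t \<le> real k then real k else 0) * (real r + real R) / \<mu>)"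
  using rR
proof (induction m arbitrary: r)
  case 0 thus ?case by simp
next
  case (Suc m)
  define g where "g = (\<lambda>k::nat. if t \<le> real k then real k else 0)"
  define Eg where "Eg = measure_pmf.expectation p g"
  have g0: "0 \<le> g k" for k unfolding g_def by auto
  have Eg0: "0 \<le> Eg" unfolding Eg_def by (intro integral_nonneg_AE) (auto simp: g0)
  define \<Phi> where "\<Phi> = (\<lambda>r::nat. if r = 0 then 0 else Eg * (real r + real R) / \<mu>)"
  have \<Phi>0: "0 \<le> \<Phi> r" for r unfolding \<Phi>_def using Eg0 mupos by auto
  show ?case
  proof (cases "r = 0")
    case True thus ?thesis by (simp add: W_zero)
  next
    case False
    have step: "(\<integral>\<^sup>+ks. ennreal (W t ks r) \<partial>iid_list (Suc m) p)
        = (\<integral>\<^sup>+k. \<integral>\<^sup>+ks. ennreal (g k + W t ks (r - k)) \<partial>iid_list m p \<partial>p)"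
      using False by (simp add: g_def)
    have inner: "(\<integral>\<^sup>+ks. ennreal (g k + W t ks (r - k)) \<partial>iid_list m p) \<le> ennreal (g k + \<Phi> (r - k))" for k
    proof -
      have "(\<integral>\<^sup>+ks. ennreal (g k + W t ks (r - k)) \<partial>iid_list m p)
          = (\<integral>\<^sup>+ks. ennreal (g k) + ennreal (W t ks (r - k)) \<partial>iid_list m p)"
        by (intro nn_integral_cong) (simp add: ennreal_plus g0 W_nonneg)
      also have "\<dots> = ennreal (g k) + (\<integral>\<^sup>+ks. ennreal (W t ks (r - k)) \<partial>iid_list m p)"
        by (subst nn_integral_add) (auto simp: measure_pmf.emeasure_space_1)
      also have "\<dots> \<le> ennreal (g k) + ennreal (\<Phi> (r - k))"
        using Suc.IH[of "r - k"] Suc.prems unfolding \<Phi>_def Eg_def g_def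
        by (intro add_left_mono) auto
      also have "\<dots> = ennreal (g k + \<Phi> (r - k))" by (simp add: ennreal_plus g0 \<Phi>0)
      finally show ?thesis .
    qed
    have bnd\<Phi>: "\<Phi> (r - k) \<le> Eg * (real r + real R) / \<mu>" for k
      unfolding \<Phi>_def using Eg0 mupos by (auto intro!: divide_right_mono mult_left_mono)
    have int\<Phi>: "integrable p (\<lambda>k. \<Phi> (r - k))"
      by (intro measure_pmf.integrable_const_bound[where B="Eg * (real r + real R) / \<mu>"])
         (auto simp: \<Phi>0 bnd\<Phi>)
    have intmin: "integrable p (\<lambda>k. real (min k R))"
      by (intro measure_pmf.integrable_const_bound[where B="real R"]) auto
    have intg': "integrable p g" using intg unfolding g_def .
    have pw: "\<Phi> (r - k) \<le> Eg / \<mu> * (real r + real R) - Eg / \<mu> * real (min k R)" for k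
    proof (cases "k < r")
      case True
      hence "min k R = k" using Suc.prems by simp
      thus ?thesis using True False mupos unfolding \<Phi>_def by (simp add: field_simps of_nat_diff)
    next
      case f: False
      have "Eg / \<mu> * real (min k R) \<le> Eg / \<mu> * (real r + real R)"
        using Eg0 mupos by (intro mult_left_mono) auto
      thus ?thesis using f unfolding \<Phi>_def by simp
    qed
    have "measure_pmf.expectation p (\<lambda>k. \<Phi> (r - k))
        \<le> measure_pmf.expectation p (\<lambda>k. Eg / \<mu> * (real r + real R) - Eg / \<mu> * real (min k R))"
      using intmin by (intro integral_mono int\<Phi> pw) auto
    also have "\<dots> = Eg / \<mu> * (real r + real R) - Eg / \<mu> * \<mu>"
      using intmin mudef by (simp add: integral_diff)
    also have "\<dots> = Eg / \<mu> * (real r + real R) - Eg" using mupos by simp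
    finally have E\<Phi>: "measure_pmf.expectation p (\<lambda>k. \<Phi> (r - k)) \<le> Eg / \<mu> * (real r + real R) - Eg" .
    have "(\<integral>\<^sup>+ks. ennreal (W t ks r) \<partial>iid_list (Suc m) p) \<le> (\<integral>\<^sup>+k. ennreal (g k + \<Phi> (r - k)) \<partial>p)"
      unfolding step by (intro nn_integral_mono inner)
    also have "\<dots> = ennreal (measure_pmf.expectation p (\<lambda>k. g k + \<Phi> (r - k)))"
      by (intro nn_integral_eq_integral) (auto intro: intg' int\<Phi> simp: g0 \<Phi>0 add_nonneg_nonneg)
    also have "\<dots> = ennreal (Eg + measure_pmf.expectation p (\<lambda>k. \<Phi> (r - k)))"
      unfolding Eg_def using intg' int\<Phi> by simp
    also have "\<dots> \<le> ennreal (Eg * (real r + real R) / \<mu>)"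
      using E\<Phi> by (intro ennreal_leI) simp
    finally show ?thesis using False unfolding Eg_def g_def by simp
  qed
qed



lemma iid_length: "ks \<in> set_pmf (iid_list m p) \<Longrightarrow> length ks = m"
  by (induction m arbitrary: ks) auto

lemma frags_length: "length (frags ks xs) \<le> length ks"
  by (induction ks arbitrary: xs) auto

lemma frags_elem: "f \<in> set (frags ks xs) \<Longrightarrow> length (snd f) \<le> length xs"
proof (induction ks arbitrary: xs)
  case Nil thus ?case by simp
next
  case (Cons k ks)
  show ?case
  proof (cases "f \<in> set (frags ks (drop k xs))")
    case True thus ?thesis using Cons.IH[of "drop k xs"] by simp
  next
    case False thus ?thesis using Cons.prems by (auto split: if_splits)
  qed
qed

lemma sum_filter_image:
  "(\<Sum>s\<in>#image_mset snd (filter_mset Q M). h s) = (\<Sum>f\<in>#M. (if Q f then h (snd f) else (0::real)))"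
  by (induction M) auto

lemma cost_bound:
  fixes t :: real
  assumes t1: "1 \<le> t" and M0: "M0 \<in> set_pmf (keep d (frags ks xs))"
  shows "2 * real (length (enc (image_mset snd (filter_mset (\<lambda>f. t \<le> real (fst f)) M0)))) + 1
         \<le> 6 * W t ks (length xs) + 1"
proof -
  define G where "G = (\<lambda>f::nat \<times> bool list. if t \<le> real (fst f) then 4 * real (length (snd f)) + 2 else 0)"
  have "2 * real (length (enc (image_mset snd (filter_mset (\<lambda>f. t \<le> real (fst f)) M0))))
      = 2 * (\<Sum>s\<in>#image_mset snd (filter_mset (\<lambda>f. t \<le> real (fst f)) M0). 2 * real (length s) + 1)"
    unfolding length_enc by (simp add: of_nat_sum_mset multiset.map_comp o_def add.commute)
  also have "\<dots> = (\<Sum>s\<in>#image_mset snd (filter_mset (\<lambda>f. t \<le> real (fst f)) M0). 4 * real (length s) + 2)"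
    by (simp add: sum_mset_distrib_left algebra_simps)
  also have "\<dots> = (\<Sum>f\<in>#M0. G f)" unfolding sum_filter_image G_def ..
  also have "\<dots> \<le> (\<Sum>f\<in>#mset (frags ks xs). G f)"
    by (rule sum_mset_mono_sub[OF keep_sub[OF M0]]) (auto simp: G_def)
  also have "\<dots> = (\<Sum>f\<leftarrow>frags ks xs. G f)" by (metis mset_map sum_mset_sum_list)
  also have "\<dots> \<le> 6 * W t ks (length xs)" unfolding G_def by (rule frags_bound[OF t1])
  finally show ?thesis by simp
qed

lemma six: "0 \<le> (x::real) \<Longrightarrow> 6 * ennreal x + 1 = ennreal (6 * x + 1)"
  by (simp add: ennreal_plus ennreal_mult)

lemma entropy_bound:
  fixes P :: "nat \<Rightarrow> bool list pmf" and Nd :: "nat \<Rightarrow> nat pmf" and d :: "nat \<Rightarrow> real" and J L n :: nat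
  defines "t \<equiv> real J / real L * log 2 (real n)"
  assumes input: "set_pmf (P n) \<subseteq> {xs. length xs = n}"
    and t1: "1 \<le> t"
    and intg: "integrable (Nd n) (\<lambda>k. if t \<le> real k then real k else 0)"
    and mupos: "0 < \<mu>"
    and mudef: "\<mu> = measure_pmf.expectation (Nd n) (\<lambda>k. real (min k n))"
  shows "entropy_pmf (Y_ge P Nd d J L n)
     \<le> 6 * (measure_pmf.expectation (Nd n) (\<lambda>k. if t \<le> real k then real k else 0) * (2 * real n) / \<mu>) + 1"
proof -
  define Y where "Y = Y_ge P Nd d J L n"
  define cst where "cst = (\<lambda>M. 2 * real (length (enc M)) + 1)"
  define Eg where "Eg = measure_pmf.expectation (Nd n) (\<lambda>k. if t \<le> real k then real k else 0)"
  have Eg0: "0 \<le> Eg" unfolding Eg_def by (intro integral_nonneg_AE) auto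
  have memb: "\<exists>x ks M0. x \<in> set_pmf (P n) \<and> ks \<in> set_pmf (iid_list n (Nd n)) \<and> M0 \<in> set_pmf (keep d (frags ks x))
      \<and> M = image_mset snd (filter_mset (\<lambda>f. t \<le> real (fst f)) M0)" if "M \<in> set_pmf Y" for M
    using that unfolding Y_def Y_ge_def t_def by auto
  define A where "A = (\<Union>j\<le>n. multisets_of_size {w :: bool list. length w \<le> n} j)"
  have finA: "finite A" unfolding A_def by (intro finite_UN_I) (auto intro: fin_bl)
  have SA: "set_pmf Y \<subseteq> A"
  proof
    fix M assume "M \<in> set_pmf Y"
    then obtain x ks M0 where x: "x \<in> set_pmf (P n)" and ks: "ks \<in> set_pmf (iid_list n (Nd n))"
      and M0: "M0 \<in> set_pmf (keep d (frags ks x))"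
      and M: "M = image_mset snd (filter_mset (\<lambda>f. t \<le> real (fst f)) M0)"
      using memb by blast
    have lx: "length x = n" using x input by auto
    have sub: "M \<subseteq># image_mset snd (mset (frags ks x))"
      unfolding M using keep_sub[OF M0]
      by (intro image_mset_subseteq_mono) (rule subset_mset.order_trans[OF multiset_filter_subset])
    have "size M \<le> n" using size_mset_mono[OF sub] frags_length[of ks x] iid_length[OF ks] by simp
    moreover have "set_mset M \<subseteq> {w. length w \<le> n}"
      using set_mset_mono[OF sub] frags_elem[of _ ks x] lx by auto
    ultimately show "M \<in> A" unfolding A_def multisets_of_size_def by auto
  qed
  have finS: "finite (set_pmf Y)" using finite_subset[OF SA finA] .
  define q where "q = (\<lambda>M. (1/2::real) ^ (2 * length (enc M) + 1))"
  have "(\<Sum>M\<in>set_pmf Y. q M) = (\<Sum>w\<in>enc ` set_pmf Y. (1/2::real) ^ (2 * length w + 1))"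
    unfolding q_def by (subst sum.reindex) (auto intro: inj_on_subset[OF inj_enc])
  also have "\<dots> \<le> 1" by (intro qsum_fin finite_imageI finS)
  finally have qs: "(\<Sum>M\<in>set_pmf Y. q M) \<le> 1" .
  have lq: "- log 2 (q M) = cst M" for M
    unfolding q_def cst_def by (simp add: log_nat_power log_divide)
  have "entropy_pmf Y \<le> (\<Sum>M\<in>set_pmf Y. pmf Y M * cst M)"
    using gibbs[OF finS, of q] qs unfolding lq by (simp add: q_def)
  also have "\<dots> \<le> 6 * (Eg * (2 * real n) / \<mu>) + 1"
  proof -
    have cst0: "0 \<le> cst M" for M unfolding cst_def by simp
    have "ennreal (\<Sum>M\<in>set_pmf Y. pmf Y M * cst M) = (\<Sum>M\<in>set_pmf Y. ennreal (cst M) * pmf Y M)"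
      by (subst sum_ennreal[symmetric]) (auto simp: cst0 ennreal_mult mult.commute)
    also have "\<dots> = (\<integral>\<^sup>+M. ennreal (cst M) \<partial>Y)"
      by (rule nn_integral_measure_pmf_finite[symmetric, OF finS]) simp
    also have "\<dots> = (\<integral>\<^sup>+x. \<integral>\<^sup>+ks. \<integral>\<^sup>+M0. ennreal (cst (image_mset snd (filter_mset (\<lambda>f. t \<le> real (fst f)) M0)))
         \<partial>keep d (frags ks x) \<partial>iid_list n (Nd n) \<partial>P n)"
      unfolding Y_def Y_ge_def t_def by simp
    also have "\<dots> \<le> (\<integral>\<^sup>+x. \<integral>\<^sup>+ks. \<integral>\<^sup>+M0. ennreal (6 * W t ks n + 1)
         \<partial>keep d (frags ks x) \<partial>iid_list n (Nd n) \<partial>P n)"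
    proof (intro nn_integral_mono_AE AE_pmfI)
      fix x ks M0 assume x: "x \<in> set_pmf (P n)" and ks: "ks \<in> set_pmf (iid_list n (Nd n))"
        and M0: "M0 \<in> set_pmf (keep d (frags ks x))"
      have "length x = n" using x input by auto
      thus "ennreal (cst (image_mset snd (filter_mset (\<lambda>f. t \<le> real (fst f)) M0))) \<le> ennreal (6 * W t ks n + 1)"
        using cost_bound[OF t1 M0] unfolding cst_def by (intro ennreal_leI) simp
    qed
    also have "\<dots> = (\<integral>\<^sup>+ks. ennreal (6 * W t ks n) + 1 \<partial>iid_list n (Nd n))"
      by (simp add: measure_pmf.emeasure_space_1 ennreal_plus W_nonneg)
    also have "\<dots> = 6 * (\<integral>\<^sup>+ks. ennreal (W t ks n) \<partial>iid_list n (Nd n)) + 1"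
      by (subst nn_integral_add) (auto simp: measure_pmf.emeasure_space_1 ennreal_mult W_nonneg nn_integral_cmult)
    also have "\<dots> \<le> 6 * ennreal (if n = 0 then 0 else Eg * (real n + real n) / \<mu>) + 1"
      using W_exp[OF intg mupos, of n n n] mudef unfolding Eg_def
      by (intro add_right_mono mult_left_mono) auto
    also have "\<dots> \<le> 6 * ennreal (Eg * (2 * real n) / \<mu>) + 1"
      using Eg0 mupos by (auto intro!: add_right_mono mult_left_mono ennreal_leI)
    also have "\<dots> = ennreal (6 * (Eg * (2 * real n) / \<mu>) + 1)"
      using Eg0 mupos by (intro six) simp
    finally have fin: "ennreal (\<Sum>M\<in>set_pmf Y. pmf Y M * cst M) \<le> ennreal (6 * (Eg * (2 * real n) / \<mu>) + 1)" .
    have "0 \<le> 6 * (Eg * (2 * real n) / \<mu>) + 1" using Eg0 mupos by simp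
    then show ?thesis using fin ennreal_le_iff by blast
  qed
  finally show ?thesis unfolding Y_def Eg_def .
qed



lemma pw_min: "real k - real k ^ 2 / real n \<le> real (min k n)" if "0 < n" for k n :: nat
proof -
  have a: "real k - real k ^ 2 / real n \<le> real k" using that by simp
  have "0 \<le> (real k - real n)^2" by simp
  hence "0 \<le> real k^2 - 2*real k*real n + real n^2" by (simp add: power2_diff)
  moreover have "0 \<le> real k * real n" by simp
  ultimately have "real k * real n - real k ^ 2 \<le> real n ^ 2" by linarith
  hence b: "real k - real k ^ 2 / real n \<le> real n" using that
    by (simp add: field_simps power2_eq_square)
  show ?thesis using a b by (simp add: min_def)
qed

lemma pw_g: "(if t \<le> real k then real k else 0) \<le> real k ^ 2 / t" if "0 < t" for t :: real and k :: nat
proof (cases "t \<le> real k")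
  case True
  hence "real k * t \<le> real k * real k" by (intro mult_left_mono) auto
  thus ?thesis using True that by (simp add: field_simps power2_eq_square)
qed (use that in simp)

lemma lim_aux: "(\<lambda>n. log 2 (real n) / real n) \<longlonglongrightarrow> 0"
  by real_asymp



theorem lemma4:
  fixes P :: "nat \<Rightarrow> bool list pmf" and Nd :: "nat \<Rightarrow> nat pmf"
    and d :: "nat \<Rightarrow> real" and \<alpha> :: real
  assumes input: "\<And>n. set_pmf (P n) \<subseteq> {xs. length xs = n}"
    and pos: "\<And>n. set_pmf (Nd n) \<subseteq> {0<..}"
    and d01: "\<And>k. 0 \<le> d k \<and> d k \<le> 1"
    and int2: "\<And>n. integrable (measure_pmf (Nd n)) (\<lambda>k. (real k)\<^sup>2)"
    and alpha_pos: "0 < \<alpha>"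
    and alpha: "(\<lambda>n. log 2 (real n) / measure_pmf.expectation (Nd n) real) \<longlonglongrightarrow> \<alpha>"
    and bdd: "\<exists>B. \<forall>n\<ge>2.
         measure_pmf.expectation (Nd n) (\<lambda>k. real k / log 2 (real n)) \<le> B \<and>
         measure_pmf.expectation (Nd n) (\<lambda>k. (real k / log 2 (real n))\<^sup>2) \<le> B"
  shows "\<exists>S::real. \<forall>J L :: nat. 1 \<le> L \<longrightarrow> L < J \<longrightarrow> (\<forall>\<delta>>0.
           limsup (\<lambda>n. ereal (entropy_pmf (Y_ge P Nd d J L n) / real n))
             \<le> ereal (2 * (S * sqrt (real L / real J) + \<delta>)))"
proof -
  obtain B where B: "\<And>n. n \<ge> 2 \<Longrightarrow> measure_pmf.expectation (Nd n) (\<lambda>k. (real k / log 2 (real n))\<^sup>2) \<le> B"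
    using bdd by blast
  define m1 where "m1 = (\<lambda>n. measure_pmf.expectation (Nd n) (\<lambda>k. real k))"
  define m2 where "m2 = (\<lambda>n. measure_pmf.expectation (Nd n) (\<lambda>k. (real k)\<^sup>2))"
  have int1: "integrable (Nd n) (\<lambda>k. real k)" for n
  proof (rule Bochner_Integration.integrable_bound[OF int2[of n]])
    show "AE x in Nd n. norm (real x) \<le> norm ((real x)\<^sup>2)"
      by (intro AE_I2) (simp add: power2_eq_square, metis of_nat_mult of_nat_le_iff le_square)
  qed auto
  have m2B: "m2 n \<le> B * (log 2 (real n))\<^sup>2" if "n \<ge> 2" for n
  proof -
    have lpos: "0 < log 2 (real n)" using that by simp
    have "measure_pmf.expectation (Nd n) (\<lambda>k. (real k / log 2 (real n))\<^sup>2) = m2 n / (log 2 (real n))\<^sup>2"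
      unfolding m2_def by (simp add: power_divide)
    thus ?thesis using B[OF that] lpos by (simp add: field_simps)
  qed
  have B0: "0 \<le> B"
  proof -
    have "0 \<le> measure_pmf.expectation (Nd 2) (\<lambda>k. (real k / log 2 (real (2::nat)))\<^sup>2)"
      by (intro integral_nonneg_AE) auto
    thus ?thesis using B[of 2] by linarith
  qed
  define S where "S = 6 * B * \<alpha>"
  show ?thesis
  proof (intro exI[of _ S] allI impI)
    fix J L :: nat and \<delta> :: real
    assume L1: "1 \<le> L" and LJ: "L < J" and \<delta>: "0 < \<delta>"
    define r where "r = real L / real J"
    have r0: "0 < r" and r1: "r < 1" using L1 LJ unfolding r_def by auto
    define v where "v = (\<lambda>n. m1 n / log 2 (real n) - B * (log 2 (real n) / real n))"
    have v_lim: "v \<longlonglongrightarrow> inverse \<alpha> - B * 0"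
    proof -
      have "(\<lambda>n. inverse (log 2 (real n) / m1 n)) \<longlonglongrightarrow> inverse \<alpha>"
        using tendsto_inverse[OF alpha] alpha_pos unfolding m1_def by simp
      hence "(\<lambda>n. m1 n / log 2 (real n)) \<longlonglongrightarrow> inverse \<alpha>" by simp
      thus ?thesis unfolding v_def by (intro tendsto_diff tendsto_mult tendsto_const lim_aux)
    qed
    define u where "u = (\<lambda>n. 12 * B * r / v n + 1 / real n)"
    have u_lim: "u \<longlonglongrightarrow> 12 * B * r / inverse \<alpha> + 0"
      unfolding u_def using v_lim alpha_pos
      by (intro tendsto_add tendsto_divide tendsto_const lim_1_over_n) auto
    have ev1: "eventually (\<lambda>n. u n < 12 * B * r * \<alpha> + 2 * \<delta>) sequentially"
      using order_tendstoD(2)[OF u_lim, of "12 * B * r * \<alpha> + 2 * \<delta>"] \<delta> by (simp add: field_simps)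
    have ev2: "eventually (\<lambda>n. 0 < v n) sequentially"
      using order_tendstoD(1)[OF v_lim, of 0] alpha_pos by simp
    have key: "entropy_pmf (Y_ge P Nd d J L n) / real n \<le> u n"
      if n2: "n \<ge> 2" and vpos: "0 < v n" for n
    proof -
      define l where "l = log 2 (real n)"
      have l1: "1 \<le> l" unfolding l_def using n2 by simp
      define t where "t = real J / real L * l"
      have t1: "l \<le> t" unfolding t_def using L1 LJ l1 by (simp add: field_simps)
      hence tpos: "0 < t" using l1 by simp
      define \<mu> where "\<mu> = measure_pmf.expectation (Nd n) (\<lambda>k. real (min k n))"
      have intmin: "integrable (Nd n) (\<lambda>k. real (min k n))"
        by (intro measure_pmf.integrable_const_bound[where B="real n"]) auto
      have "m1 n - m2 n / real n = measure_pmf.expectation (Nd n) (\<lambda>k. real k - (real k)\<^sup>2 / real n)"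
        unfolding m1_def m2_def using int1 int2 by simp
      also have "\<dots> \<le> \<mu>" unfolding \<mu>_def
        using n2 int1 int2 intmin by (intro integral_mono pw_min) auto
      finally have mu1: "m1 n - m2 n / real n \<le> \<mu>" .
      have "l * v n = m1 n - B * l\<^sup>2 / real n"
        unfolding v_def l_def using l1 l_def by (simp add: field_simps power2_eq_square)
      also have "\<dots> \<le> m1 n - m2 n / real n"
        using m2B[OF n2] n2 unfolding l_def by (simp add: divide_right_mono)
      finally have mu2: "l * v n \<le> \<mu>" using mu1 by simp
      have mupos: "0 < \<mu>" using mu2 l1 vpos by (smt (verit) mult_pos_pos)
      define g where "g = (\<lambda>k::nat. if t \<le> real k then real k else 0)"
      have intg: "integrable (Nd n) g"
      proof (rule Bochner_Integration.integrable_bound[OF int1[of n]])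
        show "AE x in Nd n. norm (g x) \<le> norm (real x)"
          by (intro AE_I2) (simp add: g_def)
      qed (auto simp: g_def)
      define Eg where "Eg = measure_pmf.expectation (Nd n) g"
      have "Eg \<le> measure_pmf.expectation (Nd n) (\<lambda>k. (real k)\<^sup>2 / t)"
        unfolding Eg_def g_def using tpos intg int2 unfolding g_def
        by (intro integral_mono pw_g) auto
      also have "\<dots> = m2 n / t" unfolding m2_def by simp
      also have "\<dots> \<le> B * l\<^sup>2 / t" using m2B[OF n2] tpos unfolding l_def by (simp add: divide_right_mono)
      also have "\<dots> = B * l * r" unfolding t_def r_def using l1 L1 LJ by (simp add: field_simps power2_eq_square)
      finally have Egb: "Eg \<le> B * l * r" .
      have Eg0: "0 \<le> Eg" unfolding Eg_def g_def by (intro integral_nonneg_AE) auto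
      have ent: "entropy_pmf (Y_ge P Nd d J L n) \<le> 6 * (Eg * (2 * real n) / \<mu>) + 1"
        using entropy_bound[of P n J L Nd \<mu> d, OF input] t1 l1 intg mupos
        unfolding Eg_def g_def t_def l_def \<mu>_def by simp
      have "Eg / \<mu> \<le> B * l * r / (l * v n)"
        using Egb mu2 Eg0 l1 vpos by (intro frac_le) auto
      also have "\<dots> = B * r / v n" using l1 by simp
      finally have "Eg / \<mu> \<le> B * r / v n" .
      have "entropy_pmf (Y_ge P Nd d J L n) / real n \<le> (6 * (Eg * (2 * real n) / \<mu>) + 1) / real n"
        using ent n2 by (simp add: divide_right_mono)
      also have "\<dots> = 12 * (Eg / \<mu>) + 1 / real n" using n2 by (simp add: field_simps)
      also have "\<dots> \<le> 12 * (B * r / v n) + 1 / real n" using \<open>Eg / \<mu> \<le> B * r / v n\<close> by simp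
      finally show ?thesis unfolding u_def by simp
    qed
    have rs: "r \<le> sqrt r" using r0 r1 by (simp add: real_le_rsqrt power2_eq_square mult_le_cancel_left1)
    have cmp: "12 * B * r * \<alpha> \<le> 2 * (S * sqrt r)"
      unfolding S_def using rs B0 alpha_pos by (simp add: mult_left_mono)
    have "eventually (\<lambda>n. ereal (entropy_pmf (Y_ge P Nd d J L n) / real n)
              \<le> ereal (2 * (S * sqrt (real L / real J) + \<delta>))) sequentially"
      using ev1 ev2 eventually_ge_at_top[of 2]
      by eventually_elim (use key r_def cmp in fastforce)
    thus "limsup (\<lambda>n. ereal (entropy_pmf (Y_ge P Nd d J L n) / real n))
             \<le> ereal (2 * (S * sqrt (real L / real J) + \<delta>))"
      by (rule Limsup_bounded)
  qed
qed

end
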